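(* Let $f_1,f_2,\ldots,f_{KN}$ be drawn i.i.d. from a distribution $\mathcal{F}$ over types, and for $i\in[K]$ let $\widehat{p}(\mathbf{b}^{(i)})=\frac1N\sum_{\tau=1}^N\mathbb{1}\{b_{f_{(i-1)N+\tau}}(\mathbf{x}^{(\mathbf{b}^{(i)})})=a^{(\mathbf{b}^{(i)})}\}$ (so the estimates for different $i$ use disjoint rounds). For $\mathbf{w}\in\mathcal{W}$ define $\widehat{p}(\mathbf{w})=\sum_{i=1}^K\lambda_i(\mathbf{w})\widehat{p}(\mathbf{b}^{(i)})$. Then for every $\sigma\in\Sigma$ and $a_f\in\mathcal{A}_f$, $\mathrm{Var}\big(\widehat{p}(\mathbb{1}_{(\sigma=a_f)})\big)\le\frac{K}{N}$.
   Context: Finite leader actions $\mathcal{A}$, finite follower actions $\mathcal{A}_f$, follower types $\alpha^{(1)},\ldots,\alpha^{(K)}$ with context-independent utilities $u_{\alpha^{(i)}}:\mathcal{A}\times\mathcal{A}_f\to[0,1]$; for $\mathbf{x}\in\Delta(\mathcal{A})$, $b_f(\mathbf{x})\in\arg\max_{a_f}\sum_{a_l}\mathbf{x}[a_l]u_f(a_l,a_f)$, ties broken by a fixed ordering. $\sigma^{(\mathbf{x})}$ maps $\alpha^{(i)}\mapsto b_{\alpha^{(i)}}(\mathbf{x})$, $\Sigma=\{\sigma^{(\mathbf{x})}:\mathbf{x}\in\Delta(\mathcal{A})\}$. For $\sigma\in\Sigma$, $a_f\in\mathcal{A}_f$, $\mathbb{1}_{(\sigma=a_f)}\in\{0,1\}^K$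 has $i$-th entry $\mathbb{1}\{\sigma(\alpha^{(i)})=a_f\}$, and $\mathcal{W}$ is the set of all such vectors. $\mathcal{B}=\{\mathbf{b}^{(1)},\ldots,\mathbf{b}^{(K)}\}\subseteq\mathcal{W}$ is a barycentric spanner: each $\mathbf{w}\in\mathcal{W}$ equals $\sum_i\lambda_i(\mathbf{w})\mathbf{b}^{(i)}$ with $\lambda_i(\mathbf{w})\in[-1,1]$. For each $\mathbf{b}\in\mathcal{B}$, $\mathbf{x}^{(\mathbf{b})}$, $a^{(\mathbf{b})}$ satisfy $\mathbf{b}=\mathbb{1}_{(\sigma^{(\mathbf{x}^{(\mathbf{b})})}=a^{(\mathbf{b})})}$. *)

theory Defs
  imports "HOL-Probability.Probability"
begin

definition mixed_strats :: "('l::finite \<Rightarrow> real) set" where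
  "mixed_strats = {x. (\<forall>a. 0 \<le> x a) \<and> (\<Sum>a\<in>UNIV. x a) = 1}"

definition exp_util :: "('l::finite \<Rightarrow> 'f \<Rightarrow> real) \<Rightarrow> ('l \<Rightarrow> real) \<Rightarrow> 'f \<Rightarrow> real" where
  "exp_util u x af = (\<Sum>al\<in>UNIV. x al * u al af)"

definition best_resp :: "('l::finite \<Rightarrow> 'f::{finite,linorder} \<Rightarrow> real) \<Rightarrow> ('l \<Rightarrow> real) \<Rightarrow> 'f" where
  "best_resp u x = (LEAST af. \<forall>af'. exp_util u x af' \<le> exp_util u x af)"

(* Indicator vector 1_{(sigma^(x) = af)} in {0,1}^K, for follower types indexed 0..K-1
   (entries outside {..<K} are 0). *)
definition ind_vec :: "nat \<Rightarrow> (nat \<Rightarrow> 'l::finite \<Rightarrow> 'f::{finite,linorder} \<Rightarrow> real)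
      \<Rightarrow> ('l \<Rightarrow> real) \<Rightarrow> 'f \<Rightarrow> nat \<Rightarrow> real" where
  "ind_vec K u x af = (\<lambda>j. if j < K \<and> best_resp (u j) x = af then 1 else 0)"

definition Wset :: "nat \<Rightarrow> (nat \<Rightarrow> 'l::finite \<Rightarrow> 'f::{finite,linorder} \<Rightarrow> real) \<Rightarrow> (nat \<Rightarrow> real) set" where
  "Wset K u = {ind_vec K u x af | x af. x \<in> mixed_strats}"

(* Estimate p-hat(b^(i)) from rounds i*N .. i*N+N-1 (0-indexed) of the sample s *)
definition phat_b :: "nat \<Rightarrow> (nat \<Rightarrow> 'l::finite \<Rightarrow> 'f::{finite,linorder} \<Rightarrow> real)
      \<Rightarrow> (nat \<Rightarrow> 'l \<Rightarrow> real) \<Rightarrow> (nat \<Rightarrow> 'f) \<Rightarrow> (nat \<Rightarrow> nat) \<Rightarrow> nat \<Rightarrow> real" where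
  "phat_b N u xb ab s i =
     (1 / real N) * (\<Sum>\<tau><N. if best_resp (u (s (i * N + \<tau>))) (xb i) = ab i then 1 else 0)"

definition phat :: "nat \<Rightarrow> nat \<Rightarrow> (nat \<Rightarrow> 'l::finite \<Rightarrow> 'f::{finite,linorder} \<Rightarrow> real)
      \<Rightarrow> (nat \<Rightarrow> 'l \<Rightarrow> real) \<Rightarrow> (nat \<Rightarrow> 'f) \<Rightarrow> ((nat \<Rightarrow> real) \<Rightarrow> nat \<Rightarrow> real)
      \<Rightarrow> (nat \<Rightarrow> real) \<Rightarrow> (nat \<Rightarrow> nat) \<Rightarrow> real" where
  "phat K N u xb ab lam w s = (\<Sum>i<K. lam w i * phat_b N u xb ab s i)"

end

theory Submission
  imports Defs
begin

lemma reidx: "(\<Sum>j<K*N. h j) = (\<Sum>i<K. \<Sum>\<tau><N. h (i*N+\<tau>::nat)) "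
proof (induction K)
  case 0 then show ?case by simp
next
  case (Suc K)
  have "(\<Sum>j<Suc K*N. h j) = (\<Sum>j<K*N. h j) + (\<Sum>j\<in>{K*N..<K*N+N}. h j)"
    by (simp add: lessThan_atLeast0 add.commute sum.atLeastLessThan_concat)
  also have "(\<Sum>j\<in>{K*N..<K*N+N}. h j) = (\<Sum>\<tau><N. h (K*N+\<tau>))"
    using sum.shift_bounds_nat_ivl[of h 0 "K*N" N] by (simp add: lessThan_atLeast0 ac_simps)
  finally show ?case using Suc by simp
qed

lemma var_bound:
  fixes F :: "'b pmf" and g :: "'a \<Rightarrow> 'b \<Rightarrow> real" and d :: "'a \<Rightarrow> real"
  assumes A: "finite A" and FF: "finite (set_pmf F)"
    and g01: "\<And>j t. 0 \<le> g j t \<and> g j t \<le> 1"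
  shows "measure_pmf.variance (Pi_pmf A dflt (\<lambda>_. F)) (\<lambda>s. \<Sum>j\<in>A. d j * g j (s j))
         \<le> (\<Sum>j\<in>A. (d j)^2)"
proof -
  define M where "M = Pi_pmf A dflt (\<lambda>_. F)"
  have finM: "finite (set_pmf M)" unfolding M_def using A FF
    by (simp add: set_Pi_pmf finite_PiE_dflt)
  have int: "integrable (measure_pmf M) f" for f :: "_ \<Rightarrow> real"
    by (rule integrable_measure_pmf_finite[OF finM])
  define m where "m j = measure_pmf.expectation F (g j)" for j
  have comp: "measure_pmf.expectation M (\<lambda>s. f (s j)) = measure_pmf.expectation F f" if "j \<in> A" for j and f :: "_ \<Rightarrow> real"
  proof -
    have "measure_pmf.expectation M (\<lambda>s. f (s j)) = measure_pmf.expectation (map_pmf (\<lambda>s. s j) M) f"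
      by simp
    also have "map_pmf (\<lambda>s. s j) M = F" unfolding M_def using Pi_pmf_component[OF A, of j dflt "\<lambda>_. F"] that by simp
    finally show ?thesis .
  qed
  have pair: "measure_pmf.expectation M (\<lambda>s. g j (s j) * g k (s k)) = m j * m k"
    if "j \<in> A" "k \<in> A" "j \<noteq> k" for j k
  proof -
    define f where "f x = (if x = j then g j else if x = k then g k else (\<lambda>_. 1::real))" for x
    have "(\<lambda>s. g j (s j) * g k (s k)) = (\<lambda>s. \<Prod>x\<in>A. f x (s x))"
    proof
      fix s
      have "(\<Prod>x\<in>A. f x (s x)) = (\<Prod>x\<in>{j,k}. f x (s x))"
        by (rule prod.mono_neutral_right) (use A that in \<open>auto simp: f_def\<close>)
      then show "g j (s j) * g k (s k) = (\<Prod>x\<in>A. f x (s x))" using that by (simp add: f_def)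
    qed
    then have "measure_pmf.expectation M (\<lambda>s. g j (s j) * g k (s k)) = (\<Prod>x\<in>A. measure_pmf.expectation F (f x))"
      unfolding M_def
      by (simp, subst expectation_prod_Pi_pmf) (use A FF g01 in \<open>auto simp: f_def integrable_measure_pmf_finite\<close>)
    also have "\<dots> = (\<Prod>x\<in>{j,k}. measure_pmf.expectation F (f x))"
      by (rule prod.mono_neutral_right) (use A that in \<open>auto simp: f_def measure_pmf.prob_space\<close>)
    finally show ?thesis using that by (simp add: f_def m_def)
  qed
  have diag: "measure_pmf.expectation M (\<lambda>s. g j (s j) * g j (s j)) \<le> 1" for j
  proof -
    have "measure_pmf.expectation M (\<lambda>s. g j (s j) * g j (s j)) \<le> measure_pmf.expectation M (\<lambda>s. 1)"
      by (intro integral_mono int) (use g01 in \<open>simp add: mult_le_one\<close>)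
    then show ?thesis by simp
  qed
  define Z where "Z s = (\<Sum>j\<in>A. d j * g j (s j))" for s
  have EZ: "measure_pmf.expectation M Z = (\<Sum>j\<in>A. d j * m j)"
    unfolding Z_def by (simp add: integral_sum int comp m_def)
  define E where "E j k = measure_pmf.expectation M (\<lambda>s. g j (s j) * g k (s k))" for j k
  have Z2: "(\<lambda>s. (Z s)^2) = (\<lambda>s. \<Sum>j\<in>A. \<Sum>k\<in>A. d j * d k * (g j (s j) * g k (s k)))"
    unfolding Z_def power2_eq_square sum_product by (intro ext sum.cong refl) (simp add: algebra_simps)
  have EZ2: "measure_pmf.expectation M (\<lambda>s. (Z s)^2) = (\<Sum>j\<in>A. \<Sum>k\<in>A. d j * d k * E j k)"
    unfolding Z2 E_def by (simp add: integral_sum int)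
  have "measure_pmf.variance M Z = (\<Sum>j\<in>A. \<Sum>k\<in>A. d j * d k * E j k) - (\<Sum>j\<in>A. d j * m j)^2"
    by (subst measure_pmf.variance_eq) (auto intro: int simp: EZ EZ2)
  also have "\<dots> = (\<Sum>j\<in>A. \<Sum>k\<in>A. d j * d k * (E j k - m j * m k))"
    by (simp add: power2_eq_square sum_product sum_subtractf algebra_simps)
  also have "\<dots> = (\<Sum>j\<in>A. \<Sum>k\<in>A. if k = j then d j * d j * (E j j - m j * m j) else 0)"
    by (intro sum.cong refl) (auto simp: E_def pair)
  also have "\<dots> = (\<Sum>j\<in>A. (d j)^2 * (E j j - (m j)^2))"
    using A by (simp add: power2_eq_square)
  also have "\<dots> \<le> (\<Sum>j\<in>A. (d j)^2)"
  proof (intro sum_mono)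
    fix j
    have "E j j - (m j)^2 \<le> 1" using diag[of j] unfolding E_def by (smt (verit) zero_le_power2)
    then show "(d j)^2 * (E j j - (m j)^2) \<le> (d j)^2"
      by (metis mult.right_neutral mult_left_mono zero_le_power2)
  qed
  finally show ?thesis unfolding M_def Z_def .
qed

theorem mainTheorem9:
  fixes K N :: nat
    and u :: "nat \<Rightarrow> 'l::finite \<Rightarrow> 'f::{finite,linorder} \<Rightarrow> real"
    and F :: "nat pmf"
    and b :: "nat \<Rightarrow> nat \<Rightarrow> real"
    and lam :: "(nat \<Rightarrow> real) \<Rightarrow> nat \<Rightarrow> real"
    and xb :: "nat \<Rightarrow> 'l \<Rightarrow> real"
    and ab :: "nat \<Rightarrow> 'f"
    and x :: "'l \<Rightarrow> real"
    and af :: 'f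
  assumes "N > 0"
    and u_range: "\<And>i al a. i < K \<Longrightarrow> 0 \<le> u i al a \<and> u i al a \<le> 1"
    and F_support: "set_pmf F \<subseteq> {..<K}"
    and xb_mixed_strats: "\<And>i. i < K \<Longrightarrow> xb i \<in> mixed_strats"
    and b_def: "\<And>i. i < K \<Longrightarrow> b i = ind_vec K u (xb i) (ab i)"
    and spanner: "\<And>w. w \<in> Wset K u \<Longrightarrow>
        (\<forall>i<K. \<bar>lam w i\<bar> \<le> 1) \<and> (\<forall>j<K. w j = (\<Sum>i<K. lam w i * b i j))"
    and "x \<in> mixed_strats"
  shows "measure_pmf.variance (Pi_pmf {..<K * N} 0 (\<lambda>_. F))
           (phat K N u xb ab lam (ind_vec K u x af))
         \<le> real K / real N"
  proof -
  define w where "w = ind_vec K u x af"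
  have wW: "w \<in> Wset K u" unfolding w_def Wset_def using assms(7) by blast
  have lamb: "\<bar>lam w i\<bar> \<le> 1" if "i < K" for i using spanner[OF wW] that by blast
  define d where "d j = lam w (j div N) / real N" for j
  define g where "g j t = (if best_resp (u t) (xb (j div N)) = ab (j div N) then 1 else 0::real)" for j t
  have FF: "finite (set_pmf F)" using F_support finite_subset by blast
  have eq: "phat K N u xb ab lam w = (\<lambda>s. \<Sum>j\<in>{..<K*N}. d j * g j (s j))"
  proof
    fix s
    have "(\<Sum>j\<in>{..<K*N}. d j * g j (s j)) = (\<Sum>i<K. \<Sum>\<tau><N. d (i*N+\<tau>) * g (i*N+\<tau>) (s (i*N+\<tau>)))"
      by (rule reidx)
    also have "\<dots> = (\<Sum>i<K. lam w i * phat_b N u xb ab s i)"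
      unfolding phat_b_def d_def g_def using \<open>N > 0\<close>
      by (intro sum.cong refl) (simp add: sum_distrib_left)
    finally show "phat K N u xb ab lam w s = (\<Sum>j\<in>{..<K*N}. d j * g j (s j))"
      unfolding phat_def by simp
  qed
  have "measure_pmf.variance (Pi_pmf {..<K * N} 0 (\<lambda>_. F)) (phat K N u xb ab lam w)
        \<le> (\<Sum>j\<in>{..<K*N}. (d j)^2)"
    unfolding eq by (rule var_bound) (use FF in \<open>auto simp: g_def\<close>)
  also have "(\<Sum>j\<in>{..<K*N}. (d j)^2) = (\<Sum>i<K. \<Sum>\<tau><N. (d (i*N+\<tau>))^2)"
    by (rule reidx)
  also have "\<dots> = (\<Sum>i<K. (lam w i)^2 / real N)"
    unfolding d_def using \<open>N > 0\<close> by (intro sum.cong refl) (simp add: power2_eq_square)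
  also have "\<dots> \<le> (\<Sum>i<K. 1 / real N)"
  proof (intro sum_mono divide_right_mono)
    fix i assume "i \<in> {..<K}"
    then have "\<bar>lam w i\<bar> \<le> 1" using lamb by simp
    then show "(lam w i)^2 \<le> 1" by (simp add: abs_square_le_1)
  qed simp
  also have "\<dots> = real K / real N" by simp
  finally show ?thesis unfolding w_def .
qed

end
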